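(* A quasi-orthomodular nearsemilattice $(A,\vee,\perp,0)$ is distributive if and only if it has the Riesz decomposition property.
   Context: A nearsemilattice is a poset $A$ with least element $0$ in which any two elements having a common upper bound have a join $x \vee y$ (a partial operation). It is distributive if whenever $y \vee z$ exists and $x \le y \vee z$, then $x = y' \vee z'$ for some $y' \le y$ and $z' \le z$. An orthogonality on $A$ is a binary relation $\perp$ with: $x \perp y$ implies $y \perp x$; $x \le y$ and $y \perp z$ imply $x \perp z$; $x \perp 0$ for all $x$. A quasi-orthomodular nearsemilattice is a nearsemilattice with an orthogonality such that: (a) if $x \perp y$ then $x \vee y$ exists; (b) if $x \le y$ then $y = x \vee z$ for some $z$ with $x \perp z$; (c) if $x \perp y$, $x \perp z$ and $y \le x \vee z$, then $y \le z$. Define the partial operation $x \oplus y := x \vee y$, defined exactly when $x \perp y$. The Riesz decomposition property: if $y \perp z$ and $x \le y \oplus z$, then $x = y' \oplus z'$ for some $y' \le y$ and $z' \le z$. *)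

theory Defs
  imports Main
begin

definition is_join :: "('a \<Rightarrow> 'a \<Rightarrow> bool) \<Rightarrow> 'a \<Rightarrow> 'a \<Rightarrow> 'a \<Rightarrow> bool" where
  "is_join le x y j \<longleftrightarrow> le x j \<and> le y j \<and> (\<forall>u. le x u \<and> le y u \<longrightarrow> le j u)"

definition has_join :: "('a \<Rightarrow> 'a \<Rightarrow> bool) \<Rightarrow> 'a \<Rightarrow> 'a \<Rightarrow> bool" where
  "has_join le x y \<longleftrightarrow> (\<exists>j. is_join le x y j)"

definition nearsemilattice :: "('a \<Rightarrow> 'a \<Rightarrow> bool) \<Rightarrow> 'a \<Rightarrow> bool" where
  "nearsemilattice le z \<longleftrightarrow>
     reflp le \<and> antisymp le \<and> transp le \<and> (\<forall>x. le z x) \<and>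
     (\<forall>x y. (\<exists>u. le x u \<and> le y u) \<longrightarrow> has_join le x y)"

definition distributive :: "('a \<Rightarrow> 'a \<Rightarrow> bool) \<Rightarrow> bool" where
  "distributive le \<longleftrightarrow>
     (\<forall>x y z j. is_join le y z j \<and> le x j \<longrightarrow>
        (\<exists>y' z'. le y' y \<and> le z' z \<and> is_join le y' z' x))"

definition orthogonality :: "('a \<Rightarrow> 'a \<Rightarrow> bool) \<Rightarrow> 'a \<Rightarrow> ('a \<Rightarrow> 'a \<Rightarrow> bool) \<Rightarrow> bool" where
  "orthogonality le z orth \<longleftrightarrow>
     (\<forall>x y. orth x y \<longrightarrow> orth y x) \<and>
     (\<forall>x y w. le x y \<and> orth y w \<longrightarrow> orth x w) \<and>
     (\<forall>x. orth x z)"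

definition quasi_orthomodular_nearsemilattice ::
    "('a \<Rightarrow> 'a \<Rightarrow> bool) \<Rightarrow> 'a \<Rightarrow> ('a \<Rightarrow> 'a \<Rightarrow> bool) \<Rightarrow> bool" where
  "quasi_orthomodular_nearsemilattice le z orth \<longleftrightarrow>
     nearsemilattice le z \<and> orthogonality le z orth \<and>
     (\<forall>x y. orth x y \<longrightarrow> has_join le x y) \<and>
     (\<forall>x y. le x y \<longrightarrow> (\<exists>w. orth x w \<and> is_join le x w y)) \<and>
     (\<forall>x y w j. orth x y \<and> orth x w \<and> is_join le x w j \<and> le y j \<longrightarrow> le y w)"

text \<open>Riesz decomposition: x \<oplus> y is the join of x and y, defined exactly when x \<perp> y.\<close>

definition riesz_decomposition :: "('a \<Rightarrow> 'a \<Rightarrow> bool) \<Rightarrow> ('a \<Rightarrow> 'a \<Rightarrow> bool) \<Rightarrow> bool" where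
  "riesz_decomposition le orth \<longleftrightarrow>
     (\<forall>x y z j. orth y z \<and> is_join le y z j \<and> le x j \<longrightarrow>
        (\<exists>y' z'. le y' y \<and> le z' z \<and> orth y' z' \<and> is_join le y' z' x))"

end

theory Submission
  imports Defs
begin

theorem theorem4:
  fixes le :: "'a \<Rightarrow> 'a \<Rightarrow> bool" and z :: 'a and orth :: "'a \<Rightarrow> 'a \<Rightarrow> bool"
  assumes "quasi_orthomodular_nearsemilattice le z orth"
  shows "distributive le \<longleftrightarrow> riesz_decomposition le orth"
proof -
  have ns: "nearsemilattice le z" and og: "orthogonality le z orth"
    and hj: "\<And>x y. orth x y \<Longrightarrow> has_join le x y"
    and cb: "\<And>x y. le x y \<Longrightarrow> \<exists>w. orth x w \<and> is_join le x w y"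
    using assms unfolding quasi_orthomodular_nearsemilattice_def by auto
  have tr: "\<And>a b c. le a b \<Longrightarrow> le b c \<Longrightarrow> le a c"
    using ns unfolding nearsemilattice_def by (meson transpD)
  have an: "\<And>a b. le a b \<Longrightarrow> le b a \<Longrightarrow> a = b"
    using ns unfolding nearsemilattice_def by (meson antisympD)
  have sym: "\<And>a b. orth a b \<Longrightarrow> orth b a" and dn: "\<And>a b c. le a b \<Longrightarrow> orth b c \<Longrightarrow> orth a c"
    using og unfolding orthogonality_def by blast+
  show ?thesis
  proof
    assume d: "distributive le"
    show "riesz_decomposition le orth"
      unfolding riesz_decomposition_def
    proof (intro allI impI)
      fix x y w j assume h: "orth y w \<and> is_join le y w j \<and> le x j"
      then obtain y' w' where "le y' y" "le w' w" "is_join le y' w' x"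
        using d unfolding distributive_def by blast
      moreover have "orth y' w'"
        using h \<open>le y' y\<close> \<open>le w' w\<close> by (meson sym dn)
      ultimately show "\<exists>y' z'. le y' y \<and> le z' w \<and> orth y' z' \<and> is_join le y' z' x" by blast
    qed
  next
    assume r: "riesz_decomposition le orth"
    show "distributive le"
      unfolding distributive_def
    proof (intro allI impI)
      fix x y w j assume h: "is_join le y w j \<and> le x j"
      then have yj: "le y j" and wj: "le w j" and lub: "\<And>u. le y u \<Longrightarrow> le w u \<Longrightarrow> le j u"
        and xj: "le x j" unfolding is_join_def by auto
      obtain v where v: "orth y v" "is_join le y v j" using cb[OF yj] by blast
      obtain y1 w1 where a: "le y1 y" "le w1 v" "orth y1 w1" "is_join le y1 w1 w"
        using r v wj unfolding riesz_decomposition_def by blast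
      have yw1: "orth y w1" using v(1) a(2) by (meson sym dn)
      obtain k where k: "is_join le y w1 k" using hj[OF yw1] unfolding has_join_def by blast
      have "le w k" using a k tr unfolding is_join_def by meson
      then have "le j k" using lub k unfolding is_join_def by blast
      moreover have "le k j" using k v a tr unfolding is_join_def by meson
      ultimately have "k = j" using an by blast
      with k have kj: "is_join le y w1 j" by simp
      obtain y' w' where "le y' y" "le w' w1" "is_join le y' w' x"
        using r yw1 kj xj unfolding riesz_decomposition_def by blast
      moreover have "le w1 w" using a(4) unfolding is_join_def by blast
      ultimately show "\<exists>y' z'. le y' y \<and> le z' w \<and> is_join le y' z' x" using tr by blast
    qed
  qed
qed

end
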